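(* A game $\Gamma=(N,A,u)$ is standard symmetric if and only if there exist a matching $M$ of the strategy sets $(A_i)_{i\in N}$ and a transitive subgroup $H$ of $S_N$ such that for every $\pi\in H$ the induced game bijection $M_\pi$ is an automorphism of $\Gamma$.
   Context: A (finite normal-form) game $\Gamma=(N,A,u)$ consists of a finite set $N$ of $n\ge 2$ players, a finite non-empty strategy set $A_i$ for each $i\in N$ (all of the same cardinality), $A=\times_{i\in N}A_i$, and utility functions $u_i:A\to\mathbb{R}$. A game bijection $g=(\pi;(\tau_i)_{i\in N})$ of $\Gamma$ to itself consists of a permutation $\pi$ of $N$ and bijections $\tau_i:A_i\to A_{\pi(i)}$; $g.i=\pi(i)$, $g.s_i=\tau_i(s_i)$, and $g.s$ is the profile with $(g.s)_{\pi(i)}=\tau_i(s_i)$. An automorphism is a game bijection with $u_i(s)=u_{g.i}(g.s)$ for all $i,s$; $\operatorname{Aut}(\Gamma)$ is the group of automorphisms. A symmetry group is a subgroup $G\le\operatorname{Aut}(\Gamma)$; the stabiliser of player $i$ is $G_i=\{g\in G:g.i=i\}$. $G$ is player transitive if for all $i,j\in N$ some $g\in G$ has $g.i=j$; $G$ is strategy trivial if for every $i\in N$ and every $g\in G_i$, $g.s_i=s_i$ for all $s_i\in A_i$. $\Gamma$ is standard symmetric if it has a player transitive and strategy trivial symmetry group. A matching of $A_1,\dots,A_n$ is a set $M\subseteq\times_iA_i$ of $n$-tuples such that every element of every $A_i$ appears in exactly one tuple of $M$; it induces bijections $M_{ij}:A_i\to A_j$ sending $a_i$ to the $j$-th entry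 of the unique tuple containing $a_i$. For $\pi\in S_N$, $M_\pi$ denotes the game bijection $(\pi;(M_{i\pi(i)})_{i\in N})$. *)

theory Defs
  imports Complex_Main "HOL-Combinatorics.Permutations"
begin

text \<open>Profiles are the extensional functions in PiE N A.\<close>

definition game :: "'p set \<Rightarrow> ('p \<Rightarrow> 's set) \<Rightarrow> ('p \<Rightarrow> ('p \<Rightarrow> 's) \<Rightarrow> real) \<Rightarrow> bool" where
  "game N A u \<longleftrightarrow> finite N \<and> card N \<ge> 2 \<and>
     (\<forall>i\<in>N. finite (A i) \<and> A i \<noteq> {}) \<and>
     (\<forall>i\<in>N. \<forall>j\<in>N. card (A i) = card (A j))"

type_synonym ('p, 's) gbij = "('p \<Rightarrow> 'p) \<times> ('p \<Rightarrow> 's \<Rightarrow> 's)"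

definition game_bij :: "'p set \<Rightarrow> ('p \<Rightarrow> 's set) \<Rightarrow> ('p, 's) gbij \<Rightarrow> bool" where
  "game_bij N A g \<longleftrightarrow> fst g permutes N \<and>
     (\<forall>i\<in>N. bij_betw (snd g i) (A i) (A (fst g i))) \<and>
     (\<forall>i x. (i \<notin> N \<or> x \<notin> A i) \<longrightarrow> snd g i x = undefined)"

text \<open>Action on profiles: (g.s)_(pi i) = tau_i (s_i).\<close>

definition act_profile :: "'p set \<Rightarrow> ('p, 's) gbij \<Rightarrow> ('p \<Rightarrow> 's) \<Rightarrow> ('p \<Rightarrow> 's)" where
  "act_profile N g s = (\<lambda>j. if j \<in> N then snd g (inv (fst g) j) (s (inv (fst g) j)) else undefined)"

definition is_aut :: "'p set \<Rightarrow> ('p \<Rightarrow> 's set) \<Rightarrow> ('p \<Rightarrow> ('p \<Rightarrow> 's) \<Rightarrow> real) \<Rightarrow> ('p, 's) gbij \<Rightarrow> bool" where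
  "is_aut N A u g \<longleftrightarrow> game_bij N A g \<and>
     (\<forall>i\<in>N. \<forall>s\<in>PiE N A. u i s = u (fst g i) (act_profile N g s))"

definition gb_id :: "'p set \<Rightarrow> ('p \<Rightarrow> 's set) \<Rightarrow> ('p, 's) gbij" where
  "gb_id N A = (id, \<lambda>i x. if i \<in> N \<and> x \<in> A i then x else undefined)"

text \<open>Composition: first g, then h.\<close>
definition gb_comp :: "'p set \<Rightarrow> ('p \<Rightarrow> 's set) \<Rightarrow> ('p, 's) gbij \<Rightarrow> ('p, 's) gbij \<Rightarrow> ('p, 's) gbij" where
  "gb_comp N A h g = (fst h \<circ> fst g,
     \<lambda>i x. if i \<in> N \<and> x \<in> A i then snd h (fst g i) (snd g i x) else undefined)"

definition gb_inv :: "'p set \<Rightarrow> ('p \<Rightarrow> 's set) \<Rightarrow> ('p, 's) gbij \<Rightarrow> ('p, 's) gbij" where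
  "gb_inv N A g = (inv (fst g),
     \<lambda>j y. if j \<in> N \<and> y \<in> A j
            then inv_into (A (inv (fst g) j)) (snd g (inv (fst g) j)) y else undefined)"

definition symmetry_group :: "'p set \<Rightarrow> ('p \<Rightarrow> 's set) \<Rightarrow> ('p \<Rightarrow> ('p \<Rightarrow> 's) \<Rightarrow> real)
    \<Rightarrow> ('p, 's) gbij set \<Rightarrow> bool" where
  "symmetry_group N A u G \<longleftrightarrow> G \<subseteq> {g. is_aut N A u g} \<and> gb_id N A \<in> G \<and>
     (\<forall>g\<in>G. \<forall>h\<in>G. gb_comp N A h g \<in> G) \<and> (\<forall>g\<in>G. gb_inv N A g \<in> G)"

definition player_transitive :: "'p set \<Rightarrow> ('p, 's) gbij set \<Rightarrow> bool" where
  "player_transitive N G \<longleftrightarrow> (\<forall>i\<in>N. \<forall>j\<in>N. \<exists>g\<in>G. fst g i = j)"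

definition strategy_trivial :: "'p set \<Rightarrow> ('p \<Rightarrow> 's set) \<Rightarrow> ('p, 's) gbij set \<Rightarrow> bool" where
  "strategy_trivial N A G \<longleftrightarrow>
     (\<forall>i\<in>N. \<forall>g\<in>G. fst g i = i \<longrightarrow> (\<forall>x\<in>A i. snd g i x = x))"

definition standard_symmetric :: "'p set \<Rightarrow> ('p \<Rightarrow> 's set) \<Rightarrow> ('p \<Rightarrow> ('p \<Rightarrow> 's) \<Rightarrow> real) \<Rightarrow> bool" where
  "standard_symmetric N A u \<longleftrightarrow>
     (\<exists>G. symmetry_group N A u G \<and> player_transitive N G \<and> strategy_trivial N A G)"

definition matching :: "'p set \<Rightarrow> ('p \<Rightarrow> 's set) \<Rightarrow> ('p \<Rightarrow> 's) set \<Rightarrow> bool" where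
  "matching N A M \<longleftrightarrow> M \<subseteq> PiE N A \<and> (\<forall>i\<in>N. \<forall>a\<in>A i. \<exists>!m. m \<in> M \<and> m i = a)"

definition match_map :: "('p \<Rightarrow> 's) set \<Rightarrow> 'p \<Rightarrow> 'p \<Rightarrow> 's \<Rightarrow> 's" where
  "match_map M i j a = (THE m. m \<in> M \<and> m i = a) j"

definition match_bij :: "'p set \<Rightarrow> ('p \<Rightarrow> 's set) \<Rightarrow> ('p \<Rightarrow> 's) set \<Rightarrow> ('p \<Rightarrow> 'p) \<Rightarrow> ('p, 's) gbij" where
  "match_bij N A M \<pi> = (\<pi>, \<lambda>i x. if i \<in> N \<and> x \<in> A i then match_map M i (\<pi> i) x else undefined)"

definition perm_subgroup :: "'p set \<Rightarrow> ('p \<Rightarrow> 'p) set \<Rightarrow> bool" where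
  "perm_subgroup N H \<longleftrightarrow> (\<forall>\<pi>\<in>H. \<pi> permutes N) \<and> id \<in> H \<and>
     (\<forall>\<pi>\<in>H. \<forall>\<sigma>\<in>H. \<pi> \<circ> \<sigma> \<in> H) \<and> (\<forall>\<pi>\<in>H. inv \<pi> \<in> H)"

definition transitive_on :: "'p set \<Rightarrow> ('p \<Rightarrow> 'p) set \<Rightarrow> bool" where
  "transitive_on N H \<longleftrightarrow> (\<forall>i\<in>N. \<forall>j\<in>N. \<exists>\<pi>\<in>H. \<pi> i = j)"

end

theory Submission
  imports Defs
begin

lemma matching_the:
  assumes "matching N A M" "i\<in>N" "x\<in>A i"
  shows "(THE m. m \<in> M \<and> m i = x) \<in> M \<and> (THE m. m \<in> M \<and> m i = x) i = x"
proof -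
  have "\<exists>!m. m \<in> M \<and> m i = x" using assms unfolding matching_def by blast
  then show ?thesis by (rule theI')
qed

lemma matching_the_eq:
  assumes "matching N A M" "m \<in> M" "i\<in>N"
  shows "(THE m'. m' \<in> M \<and> m' i = m i) = m"
proof -
  have "m i \<in> A i" using assms unfolding matching_def by (auto simp: PiE_iff)
  then have "\<exists>!m'. m' \<in> M \<and> m' i = m i" using assms unfolding matching_def by blast
  then show ?thesis using assms(2) by (metis (mono_tags, lifting) the1_equality)
qed

lemma mm_in:
  assumes "matching N A M" "i\<in>N" "j\<in>N" "x\<in>A i"
  shows "match_map M i j x \<in> A j"
  using matching_the[OF assms(1,2,4)] assms unfolding match_map_def matching_def
  by (auto simp: PiE_iff)

lemma mm_id:
  assumes "matching N A M" "i\<in>N" "x\<in>A i"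
  shows "match_map M i i x = x"
  using matching_the[OF assms] unfolding match_map_def by simp

lemma mm_comp:
  assumes "matching N A M" "i\<in>N" "j\<in>N" "x\<in>A i"
  shows "match_map M j k (match_map M i j x) = match_map M i k x"
proof -
  define m where "m = (THE m. m \<in> M \<and> m i = x)"
  have m: "m \<in> M" "m i = x" using matching_the[OF assms(1,2,4)] unfolding m_def by auto
  have "match_map M i j x = m j" unfolding match_map_def m_def by simp
  moreover have "(THE m'. m' \<in> M \<and> m' j = m j) = m" using matching_the_eq[OF assms(1) m(1) assms(3)] .
  ultimately show ?thesis unfolding match_map_def m_def by simp
qed

lemma key:
  assumes sg: "symmetry_group N A u G" and st: "strategy_trivial N A G"
    and i0: "i0 \<in> N" and h: "h \<in> G" and h': "h' \<in> G" and e: "fst h i0 = fst h' i0"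
    and a: "a \<in> A i0"
  shows "snd h i0 a = snd h' i0 a"
proof -
  have gb: "game_bij N A h" "game_bij N A h'" using sg h h' unfolding symmetry_group_def is_aut_def by auto
  define k where "k = gb_comp N A (gb_inv N A h') h"
  have kG: "k \<in> G" using sg h h' unfolding symmetry_group_def k_def by blast
  define j where "j = fst h i0"
  have p: "fst h' permutes N" "fst h permutes N" using gb unfolding game_bij_def by auto
  have jN: "j \<in> N" using p i0 unfolding j_def by (simp add: permutes_in_image)
  have ij: "inv (fst h') j = i0" unfolding j_def e using p(1) by (simp add: permutes_inverses(2))
  have fk: "fst k i0 = i0" unfolding k_def gb_comp_def gb_inv_def using ij j_def by simp
  have bh: "bij_betw (snd h i0) (A i0) (A j)" using gb i0 unfolding game_bij_def j_def by auto
  have bh': "bij_betw (snd h' i0) (A i0) (A j)" using gb i0 e unfolding game_bij_def j_def by auto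
  have y: "snd h i0 a \<in> A j" using bh a bij_betwE by blast
  have "snd k i0 a = inv_into (A i0) (snd h' i0) (snd h i0 a)"
    unfolding k_def gb_comp_def gb_inv_def using i0 a jN y ij j_def by simp
  moreover have "snd k i0 a = a" using st kG fk i0 a unfolding strategy_trivial_def by blast
  ultimately have "inv_into (A i0) (snd h' i0) (snd h i0 a) = a" by simp
  moreover have "snd h i0 a \<in> snd h' i0 ` A i0" using bh' y bij_betw_imp_surj_on by blast
  ultimately show ?thesis by (metis f_inv_into_f)
qed

theorem mainTheorem11:
  fixes N :: "'p set" and A :: "'p \<Rightarrow> 's set" and u :: "'p \<Rightarrow> ('p \<Rightarrow> 's) \<Rightarrow> real"
  assumes "game N A u"
  shows "standard_symmetric N A u \<longleftrightarrow>
    (\<exists>M H. matching N A M \<and> perm_subgroup N H \<and> transitive_on N H \<and>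
       (\<forall>\<pi>\<in>H. is_aut N A u (match_bij N A M \<pi>)))"
proof
  assume "standard_symmetric N A u"
  then obtain G where sg: "symmetry_group N A u G" and pt: "player_transitive N G"
    and st: "strategy_trivial N A G" unfolding standard_symmetric_def by blast
  have "N \<noteq> {}" using assms unfolding game_def by auto
  then obtain i0 where i0: "i0 \<in> N" by blast
  have gbG: "\<And>g. g \<in> G \<Longrightarrow> game_bij N A g" using sg unfolding symmetry_group_def is_aut_def by auto
  define f where "f j = (SOME g. g \<in> G \<and> fst g i0 = j)" for j
  have f: "f j \<in> G \<and> fst (f j) i0 = j" if "j \<in> N" for j
  proof -
    have "\<exists>g. g \<in> G \<and> fst g i0 = j" using pt i0 that unfolding player_transitive_def by blast
    then show ?thesis unfolding f_def by (rule someI_ex)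
  qed
  have fb: "bij_betw (snd (f j) i0) (A i0) (A j)" if "j \<in> N" for j
    using gbG[of "f j"] f[OF that] i0 unfolding game_bij_def by auto
  define mt where "mt a = (\<lambda>j. if j \<in> N then snd (f j) i0 a else undefined)" for a
  define M where "M = mt ` A i0"
  have mtP: "mt a \<in> PiE N A" if "a \<in> A i0" for a
    using fb that bij_betw_apply[OF fb] unfolding mt_def PiE_iff extensional_def by (auto dest!: bij_betw_apply)
  have match: "matching N A M"
    unfolding matching_def
  proof (intro conjI ballI)
    show "M \<subseteq> PiE N A" using mtP unfolding M_def by blast
  next
    fix i x assume iN: "i \<in> N" and x: "x \<in> A i"
    obtain a where a: "a \<in> A i0" "snd (f i) i0 a = x"
      using fb[OF iN] x by (metis bij_betw_imp_surj_on imageE)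
    show "\<exists>!m. m \<in> M \<and> m i = x"
    proof
      show "mt a \<in> M \<and> mt a i = x" using a iN unfolding M_def mt_def by auto
    next
      fix m assume m: "m \<in> M \<and> m i = x"
      then obtain b where b: "b \<in> A i0" "m = mt b" unfolding M_def by blast
      have "snd (f i) i0 b = snd (f i) i0 a" using m b a iN unfolding mt_def by auto
      then have "b = a" using fb[OF iN] a b unfolding bij_betw_def inj_on_def by blast
      then show "m = mt a" using b by simp
    qed
  qed
  define H where "H = fst ` G"
  have ps: "perm_subgroup N H" unfolding perm_subgroup_def
  proof (intro conjI ballI)
    fix \<pi> assume "\<pi> \<in> H" then show "\<pi> permutes N" using gbG unfolding H_def game_bij_def by auto
  next
    show "id \<in> H" using sg unfolding H_def symmetry_group_def gb_id_def by force
  next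
    fix \<pi> \<sigma> assume "\<pi> \<in> H" "\<sigma> \<in> H"
    then obtain g h where "g \<in> G" "h \<in> G" "\<pi> = fst g" "\<sigma> = fst h" unfolding H_def by blast
    then have "gb_comp N A g h \<in> G" "fst (gb_comp N A g h) = \<pi> \<circ> \<sigma>"
      using sg unfolding symmetry_group_def gb_comp_def by auto
    then show "\<pi> \<circ> \<sigma> \<in> H" unfolding H_def by force
  next
    fix \<pi> assume "\<pi> \<in> H"
    then obtain g where "g \<in> G" "\<pi> = fst g" unfolding H_def by blast
    then have "gb_inv N A g \<in> G" "fst (gb_inv N A g) = inv \<pi>"
      using sg unfolding symmetry_group_def gb_inv_def by auto
    then show "inv \<pi> \<in> H" unfolding H_def by force
  qed
  have tr: "transitive_on N H" using pt unfolding transitive_on_def player_transitive_def H_def by force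
  have aut: "is_aut N A u (match_bij N A M \<pi>)" if piH: "\<pi> \<in> H" for \<pi>
  proof -
    obtain g where g: "g \<in> G" "\<pi> = fst g" using piH unfolding H_def by blast
    have gb: "game_bij N A g" using gbG g by simp
    have pg: "fst g permutes N" using gb unfolding game_bij_def by simp
    have eq: "match_map M i (fst g i) x = snd g i x" if iN: "i \<in> N" and x: "x \<in> A i" for i x
    proof -
      obtain a where a: "a \<in> A i0" "snd (f i) i0 a = x"
        using fb[OF iN] x by (metis bij_betw_imp_surj_on imageE)
      have xa: "x = mt a i" using a iN unfolding mt_def by simp
      have ma: "mt a \<in> M" using a unfolding M_def by simp
      have gi: "fst g i \<in> N" using pg iN by (simp add: permutes_in_image)
      have "match_map M i (fst g i) x = mt a (fst g i)"
        unfolding match_map_def xa using matching_the_eq[OF match ma iN] by simp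
      also have "\<dots> = snd (f (fst g i)) i0 a" unfolding mt_def using gi by simp
      also have "\<dots> = snd (gb_comp N A g (f i)) i0 a"
      proof -
        have c1: "gb_comp N A g (f i) \<in> G" using sg g f[OF iN] unfolding symmetry_group_def by blast
        have c2: "fst (f (fst g i)) i0 = fst (gb_comp N A g (f i)) i0"
          using f[OF gi] f[OF iN] unfolding gb_comp_def by simp
        show ?thesis using key[OF sg st i0 f[OF gi, THEN conjunct1] c1 c2 a(1)] .
      qed
      also have "\<dots> = snd g i x" unfolding gb_comp_def using i0 a f[OF iN] by simp
      finally show ?thesis .
    qed
    have "match_bij N A M \<pi> = g"
    proof -
      have "snd (match_bij N A M \<pi>) = snd g"
      proof (intro ext)
        fix i x show "snd (match_bij N A M \<pi>) i x = snd g i x"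
          using eq[of i x] gb unfolding match_bij_def game_bij_def g(2) by auto
      qed
      then show ?thesis unfolding match_bij_def g(2) by (simp add: prod_eq_iff)
    qed
    then show ?thesis using sg g unfolding symmetry_group_def by auto
  qed
  show "\<exists>M H. matching N A M \<and> perm_subgroup N H \<and> transitive_on N H \<and>
       (\<forall>\<pi>\<in>H. is_aut N A u (match_bij N A M \<pi>))"
    using match ps tr aut by blast
next
  assume "\<exists>M H. matching N A M \<and> perm_subgroup N H \<and> transitive_on N H \<and>
       (\<forall>\<pi>\<in>H. is_aut N A u (match_bij N A M \<pi>))"
  then obtain M H where m: "matching N A M" and ps: "perm_subgroup N H" and tr: "transitive_on N H"
    and au: "\<forall>\<pi>\<in>H. is_aut N A u (match_bij N A M \<pi>)" by blast
  define G where "G = match_bij N A M ` H"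
  have perm: "\<And>\<pi>. \<pi> \<in> H \<Longrightarrow> \<pi> permutes N" using ps unfolding perm_subgroup_def by blast
  have idG: "gb_id N A \<in> G"
  proof -
    have "match_bij N A M id = gb_id N A"
      unfolding match_bij_def gb_id_def using mm_id[OF m] by (auto intro!: ext)
    then show ?thesis using ps unfolding G_def perm_subgroup_def by force
  qed
  have compG: "gb_comp N A h g \<in> G" if gh: "g \<in> G" "h \<in> G" for g h
  proof -
    obtain \<pi> \<sigma> where ps': "\<pi> \<in> H" "\<sigma> \<in> H" "g = match_bij N A M \<pi>" "h = match_bij N A M \<sigma>"
      using gh unfolding G_def by blast
    have "gb_comp N A h g = match_bij N A M (\<sigma> \<circ> \<pi>)"
    proof -
      have "snd (gb_comp N A h g) i x = snd (match_bij N A M (\<sigma> \<circ> \<pi>)) i x" for i x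
      proof (cases "i \<in> N \<and> x \<in> A i")
        case True
        have pi: "\<pi> i \<in> N" using perm[OF ps'(1)] True by (simp add: permutes_in_image)
        have "match_map M i (\<pi> i) x \<in> A (\<pi> i)" using mm_in[OF m _ pi] True by blast
        then show ?thesis using True pi mm_comp[OF m _ pi, of i x "\<sigma> (\<pi> i)"]
          unfolding gb_comp_def match_bij_def ps'(3,4) by simp
      next
        case False then show ?thesis unfolding gb_comp_def match_bij_def by auto
      qed
      then show ?thesis unfolding gb_comp_def match_bij_def ps'(3,4) by (simp add: prod_eq_iff ext)
    qed
    then show ?thesis using ps ps' unfolding G_def perm_subgroup_def by blast
  qed
  have invG: "gb_inv N A g \<in> G" if gG: "g \<in> G" for g
  proof -
    obtain \<pi> where ps': "\<pi> \<in> H" "g = match_bij N A M \<pi>" using gG unfolding G_def by blast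
    have "gb_inv N A g = match_bij N A M (inv \<pi>)"
    proof -
      have "snd (gb_inv N A g) j y = snd (match_bij N A M (inv \<pi>)) j y" for j y
      proof (cases "j \<in> N \<and> y \<in> A j")
        case True
        define k where "k = inv \<pi> j"
        have kN: "k \<in> N" unfolding k_def using perm[OF ps'(1)] True
          by (meson permutes_in_image permutes_inv)
        have pk: "\<pi> k = j" unfolding k_def using perm[OF ps'(1)] by (simp add: permutes_inverses(1))
        define F where "F = (\<lambda>x. if k \<in> N \<and> x \<in> A k then match_map M k j x else undefined)"
        have inj: "inj_on F (A k)" unfolding inj_on_def F_def using kN True
          by (metis mm_comp[OF m] mm_id[OF m])
        have z: "match_map M j k y \<in> A k" using mm_in[OF m] True kN by blast
        have Fz: "F (match_map M j k y) = y" unfolding F_def using z kN True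
          mm_comp[OF m, of j k y j] mm_id[OF m, of j y] by simp
        have "inv_into (A k) F y = match_map M j k y" using inv_into_f_eq[OF inj z Fz] .
        then show ?thesis using True unfolding gb_inv_def match_bij_def ps'(2) F_def k_def
            pk[unfolded k_def] snd_conv fst_conv
          by simp
      next
        case False then show ?thesis unfolding gb_inv_def match_bij_def by auto
      qed
      then show ?thesis unfolding gb_inv_def match_bij_def ps'(2) by (simp add: prod_eq_iff ext)
    qed
    then show ?thesis using ps ps' unfolding G_def perm_subgroup_def by blast
  qed
  have sg: "symmetry_group N A u G" unfolding symmetry_group_def
    using au idG compG invG unfolding G_def by blast
  have pt: "player_transitive N G" using tr unfolding player_transitive_def transitive_on_def G_def
    by (force simp: match_bij_def)
  have st: "strategy_trivial N A G" unfolding strategy_trivial_def G_def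
    using mm_id[OF m] by (auto simp: match_bij_def)
  show "standard_symmetric N A u" unfolding standard_symmetric_def using sg pt st by blast
qed

end
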